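(* There exists an explicit family of graphs $G$ on $n$ vertices (with $n\to\infty$) such that $\beta(G)=3$ whereas $\overline{\chi}_f(G)=\Theta(n^{1/4})$.
   Context: For an undirected graph $G$ on vertex set $[n]$, consider the index coding problem: a server holds messages $x_1,\dots,x_n\in\Sigma$ ($|\Sigma|>1$), receiver $i$ wants $x_i$ and knows $x_j$ for every neighbor $j$ of $i$. A solution is an encoding $\mathcal{E}:\Sigma^n\to\Sigma_P$ from which each receiver can recover its message given its side information, for all message values. $\beta_t(G)$ is the minimum of $\lceil\log_2|\Sigma_P|\rceil$ over solutions with $|\Sigma|=2^t$, and $\beta(G)=\lim_t\beta_t(G)/t=\inf_t\beta_t(G)/t$. $\overline{\chi}_f(G)$ is the fractional clique-cover number: the minimum total weight of a nonnegative weighting of cliques of $G$ such that each vertex is covered by total weight at least $1$. *)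

theory Defs
  imports Complex_Main "HOL-Library.Landau_Symbols" "HOL-Library.FuncSet"
begin

definition simple_graph :: "nat \<Rightarrow> (nat \<Rightarrow> nat \<Rightarrow> bool) \<Rightarrow> bool" where
  "simple_graph n E \<longleftrightarrow>
     (\<forall>u v. E u v \<longrightarrow> u < n \<and> v < n \<and> u \<noteq> v) \<and> (\<forall>u v. E u v \<longrightarrow> E v u)"

definition nbrs :: "nat \<Rightarrow> (nat \<Rightarrow> nat \<Rightarrow> bool) \<Rightarrow> nat \<Rightarrow> nat set" where
  "nbrs n E i = {j. j < n \<and> E i j}"

definition messages :: "nat \<Rightarrow> nat \<Rightarrow> (nat \<Rightarrow> nat) set" where
  "messages n t = {0..<n} \<rightarrow>\<^sub>E {0..<(2::nat)^t}"

definition ic_solution ::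
  "nat \<Rightarrow> (nat \<Rightarrow> nat \<Rightarrow> bool) \<Rightarrow> nat \<Rightarrow> nat set \<Rightarrow> ((nat \<Rightarrow> nat) \<Rightarrow> nat) \<Rightarrow> bool" where
  "ic_solution n E t P enc \<longleftrightarrow>
     finite P \<and> enc ` messages n t \<subseteq> P \<and>
     (\<exists>dec :: nat \<Rightarrow> nat \<Rightarrow> (nat \<Rightarrow> nat) \<Rightarrow> nat.
        \<forall>x\<in>messages n t. \<forall>i<n. dec i (enc x) (restrict x (nbrs n E i)) = x i)"

definition beta_t :: "nat \<Rightarrow> (nat \<Rightarrow> nat \<Rightarrow> bool) \<Rightarrow> nat \<Rightarrow> nat" where
  "beta_t n E t = Inf {nat \<lceil>log 2 (real (card P))\<rceil> | P enc. ic_solution n E t P enc}"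

definition beta :: "nat \<Rightarrow> (nat \<Rightarrow> nat \<Rightarrow> bool) \<Rightarrow> real" where
  "beta n E = (INF t\<in>{1..}. real (beta_t n E t) / real t)"

definition cliques :: "nat \<Rightarrow> (nat \<Rightarrow> nat \<Rightarrow> bool) \<Rightarrow> nat set set" where
  "cliques n E = {C. C \<subseteq> {0..<n} \<and> (\<forall>u\<in>C. \<forall>v\<in>C. u \<noteq> v \<longrightarrow> E u v)}"

definition frac_clique_cover :: "nat \<Rightarrow> (nat \<Rightarrow> nat \<Rightarrow> bool) \<Rightarrow> real" where
  "frac_clique_cover n E = Inf {(\<Sum>C\<in>cliques n E. w C) | w :: nat set \<Rightarrow> real.
      (\<forall>C\<in>cliques n E. 0 \<le> w C) \<and>
      (\<forall>v<n. (\<Sum>C\<in>{C\<in>cliques n E. v \<in> C}. w C) \<ge> 1)}"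

end

theory Submission
  imports Defs "HOL-Computational_Algebra.Primes"
begin

definition Bf :: "(nat \<Rightarrow> nat \<Rightarrow> int) \<Rightarrow> (nat \<Rightarrow> nat \<Rightarrow> int) \<Rightarrow> nat \<Rightarrow> nat \<Rightarrow> int" where
  "Bf U W i j = (\<Sum>k<3. W j k * U i k)"

lemma code_unique:
  fixes p :: nat and U W :: "nat \<Rightarrow> nat \<Rightarrow> int" and \<phi> :: "nat \<Rightarrow> nat \<Rightarrow> nat"
  assumes p: "prime p"
    and selfB: "\<forall>i<n. \<not> int p dvd Bf U W i i"
    and nonadj: "\<forall>i<n. \<forall>j<n. i \<noteq> j \<longrightarrow> \<not> E j i \<longrightarrow> int p dvd Bf U W i j"
    and phi: "\<phi> ` {0..<2^t} \<subseteq> {0..<m} \<rightarrow>\<^sub>E {0..<p}" "inj_on \<phi> {0..<2^t}"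
    and x: "x \<in> messages n t" and x': "x' \<in> messages n t"
    and eq: "\<forall>k<3. \<forall>l<m. (\<Sum>i<n. U i k * int (\<phi> (x i) l)) mod int p = (\<Sum>i<n. U i k * int (\<phi> (x' i) l)) mod int p"
    and agree: "\<forall>i\<in>nbrs n E j. x i = x' i"
    and j: "j < n"
  shows "x j = x' j"
proof -
  have xr: "x i \<in> {0..<2^t}" "x' i \<in> {0..<2^t}" if "i < n" for i
    using x x' that by (auto simp: messages_def PiE_def Pi_def)
  have dig: "\<phi> (x j) l = \<phi> (x' j) l" if l: "l < m" for l
  proof -
    define d where "d i = int (\<phi> (x i) l) - int (\<phi> (x' i) l)" for i
    have pk: "int p dvd (\<Sum>i<n. U i k * int (\<phi> (x i) l)) - (\<Sum>i<n. U i k * int (\<phi> (x' i) l))" if "k < 3" for k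
    proof -
      have "(\<Sum>i<n. U i k * int (\<phi> (x i) l)) mod int p = (\<Sum>i<n. U i k * int (\<phi> (x' i) l)) mod int p"
        using eq that l by blast
      then show ?thesis by (simp only: mod_eq_dvd_iff)
    qed
    have dk: "int p dvd (\<Sum>i<n. U i k * d i)" if "k < 3" for k
    proof -
      have "(\<Sum>i<n. U i k * d i) = (\<Sum>i<n. U i k * int (\<phi> (x i) l)) - (\<Sum>i<n. U i k * int (\<phi> (x' i) l))"
        unfolding d_def right_diff_distrib sum_subtractf ..
      then show ?thesis using pk[OF that] by simp
    qed
    have "int p dvd (\<Sum>k<3. W j k * (\<Sum>i<n. U i k * d i))"
      by (rule dvd_sum) (use dk in auto)
    also have "(\<Sum>k<3. W j k * (\<Sum>i<n. U i k * d i)) = (\<Sum>i<n. Bf U W i j * d i)"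
      unfolding Bf_def sum_distrib_left sum_distrib_right mult.assoc by (rule sum.swap)
    finally have s: "int p dvd (\<Sum>i<n. Bf U W i j * d i)" .
    have other: "int p dvd (\<Sum>i\<in>{..<n} - {j}. Bf U W i j * d i)"
    proof (rule dvd_sum)
      fix i assume i: "i \<in> {..<n} - {j}"
      show "int p dvd Bf U W i j * d i"
      proof (cases "E j i")
        case True
        then have "i \<in> nbrs n E j" using i by (auto simp: nbrs_def)
        then have "d i = 0" using agree by (simp add: d_def)
        then show ?thesis by simp
      next
        case False
        then show ?thesis using nonadj i j by auto
      qed
    qed
    have "(\<Sum>i<n. Bf U W i j * d i) = Bf U W j j * d j + (\<Sum>i\<in>{..<n} - {j}. Bf U W i j * d i)"
      by (rule sum.remove) (use j in auto)
    with s have "int p dvd Bf U W j j * d j + (\<Sum>i\<in>{..<n} - {j}. Bf U W i j * d i)" by simp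
    then have m1: "int p dvd Bf U W j j * d j" using dvd_add_left_iff[OF other] by simp
    have pp: "prime (int p)" using p by (simp only: prime_nat_int_transfer)
    have "\<not> int p dvd Bf U W j j" using selfB j by simp
    then have dj: "int p dvd d j" using m1 prime_dvd_mult_iff[OF pp] by simp
    have A1: "\<phi> (x j) \<in> {0..<m} \<rightarrow>\<^sub>E {0..<p}"
      by (rule subsetD[OF phi(1) imageI[OF xr(1)[OF j]]])
    have A2: "\<phi> (x' j) \<in> {0..<m} \<rightarrow>\<^sub>E {0..<p}"
      by (rule subsetD[OF phi(1) imageI[OF xr(2)[OF j]]])
    have "\<phi> (x j) l \<in> {0..<p}" using PiE_mem[OF A1, of l] l by simp
    then have a2: "\<phi> (x j) l < p" by simp
    have "\<phi> (x' j) l \<in> {0..<p}" using PiE_mem[OF A2, of l] l by simp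
    then have a3: "\<phi> (x' j) l < p" by simp
    have a1: "int p dvd int (\<phi> (x j) l) - int (\<phi> (x' j) l)" using dj by (simp add: d_def)
    show ?thesis
      proof (rule ccontr)
        assume "\<phi> (x j) l \<noteq> \<phi> (x' j) l"
        then have ne: "int (\<phi> (x j) l) - int (\<phi> (x' j) l) \<noteq> 0" by simp
        have "int p \<le> \<bar>int (\<phi> (x j) l) - int (\<phi> (x' j) l)\<bar>"
          using dvd_imp_le_int[OF ne a1] by simp
        with a2 a3 show False by linarith
      qed
  qed
  have "\<phi> (x j) = \<phi> (x' j)"
  proof
    fix l show "\<phi> (x j) l = \<phi> (x' j) l"
    proof (cases "l < m")
      case True then show ?thesis using dig by simp
    next
      case False
      have A1: "\<phi> (x j) \<in> {0..<m} \<rightarrow>\<^sub>E {0..<p}"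
        by (rule subsetD[OF phi(1) imageI[OF xr(1)[OF j]]])
      have A2: "\<phi> (x' j) \<in> {0..<m} \<rightarrow>\<^sub>E {0..<p}"
        by (rule subsetD[OF phi(1) imageI[OF xr(2)[OF j]]])
      have "l \<notin> {0..<m}" using False by simp
      then show ?thesis using PiE_arb[OF A1] PiE_arb[OF A2] by simp
    qed
  qed
  then show ?thesis by (rule inj_onD[OF phi(2)]) (use xr[OF j] in simp_all)
qed

lemma code_exists:
  fixes p :: nat and U W :: "nat \<Rightarrow> nat \<Rightarrow> int"
  assumes p: "prime p"
    and selfB: "\<forall>i<n. \<not> int p dvd Bf U W i i"
    and nonadj: "\<forall>i<n. \<forall>j<n. i \<noteq> j \<longrightarrow> \<not> E j i \<longrightarrow> int p dvd Bf U W i j"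
    and tm: "2^t \<le> p^m"
  shows "\<exists>P enc. ic_solution n E t P enc \<and> card P = p^(3*m)"
proof -
  have "card {0..<(2::nat)^t} \<le> card ({0..<m} \<rightarrow>\<^sub>E {0..<p})"
    using tm by (simp add: card_PiE)
  then obtain \<phi> where phi: "\<phi> ` {0..<(2::nat)^t} \<subseteq> {0..<m} \<rightarrow>\<^sub>E {0..<p}" "inj_on \<phi> {0..<(2::nat)^t}"
    using card_le_inj[of "{0..<(2::nat)^t}" "{0..<m} \<rightarrow>\<^sub>E {0..<p}"] by (auto simp: finite_PiE)
  define Y where "Y = ({0..<3::nat} \<times> {0..<m}) \<rightarrow>\<^sub>E {0..<p}"
  have finY: "finite Y" unfolding Y_def by (simp add: finite_PiE)
  have cardY: "card Y = p^(3*m)" unfolding Y_def by (simp add: card_PiE card_cartesian_product)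
  obtain f where f: "bij_betw f Y {0..<card Y}" using ex_bij_betw_finite_nat[OF finY] by blast
  define enc0 where "enc0 x = restrict (\<lambda>(k,l). nat ((\<Sum>i<n. U i k * int (\<phi> (x i) l)) mod int p)) ({0..<3::nat}\<times>{0..<m})" for x
  have p0: "p > 0" using p prime_gt_0_nat by blast
  have enc0Y: "enc0 x \<in> Y" for x
  proof -
    have "nat (a mod int p) < p" for a :: int
      using p0 by (simp add: nat_less_iff)
    then show ?thesis unfolding enc0_def Y_def by (auto simp: PiE_iff)
  qed
  define enc where "enc x = f (enc0 x)" for x
  define P where "P = {0..<card Y}"
  define dec where "dec j c r = (SOME v. \<exists>x\<in>messages n t. enc x = c \<and> restrict x (nbrs n E j) = r \<and> x j = v)" for j c r
  have key: "x' j = x j" if x: "x \<in> messages n t" and x': "x' \<in> messages n t" and j: "j < n"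
      and e: "enc x' = enc x" and r: "restrict x' (nbrs n E j) = restrict x (nbrs n E j)" for x x' j
  proof -
    have "enc0 x' = enc0 x" using e f enc0Y unfolding enc_def bij_betw_def by (auto dest: inj_onD)
    then have eq: "\<forall>k<3. \<forall>l<m. (\<Sum>i<n. U i k * int (\<phi> (x' i) l)) mod int p = (\<Sum>i<n. U i k * int (\<phi> (x i) l)) mod int p"
    proof (intro allI impI)
      fix k l assume "enc0 x' = enc0 x" "k < (3::nat)" "l < m"
      then have "enc0 x' (k,l) = enc0 x (k,l)" by simp
      then have "nat ((\<Sum>i<n. U i k * int (\<phi> (x' i) l)) mod int p) = nat ((\<Sum>i<n. U i k * int (\<phi> (x i) l)) mod int p)"
        using \<open>k < 3\<close> \<open>l < m\<close> by (simp add: enc0_def)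
      then show "(\<Sum>i<n. U i k * int (\<phi> (x' i) l)) mod int p = (\<Sum>i<n. U i k * int (\<phi> (x i) l)) mod int p"
        using p0 by (simp add: nat_eq_iff2)
    qed
    have agree: "\<forall>i\<in>nbrs n E j. x' i = x i"
    proof
      fix i assume "i \<in> nbrs n E j"
      then show "x' i = x i" using fun_cong[OF r, of i] by simp
    qed
    show ?thesis using code_unique[OF p selfB nonadj phi x' x eq agree j] .
  qed
  have "ic_solution n E t P enc"
    unfolding ic_solution_def
  proof (intro conjI exI ballI allI impI)
    show "finite P" by (simp add: P_def)
    show "enc ` messages n t \<subseteq> P"
      using f enc0Y unfolding enc_def P_def bij_betw_def by auto
    fix x j assume x: "x \<in> messages n t" and j: "j < n"
    show "dec j (enc x) (restrict x (nbrs n E j)) = x j"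
      unfolding dec_def
    proof (rule someI2)
      show "\<exists>x'\<in>messages n t. enc x' = enc x \<and> restrict x' (nbrs n E j) = restrict x (nbrs n E j) \<and> x' j = x j"
        using x by blast
    next
      fix v assume "\<exists>x'\<in>messages n t. enc x' = enc x \<and> restrict x' (nbrs n E j) = restrict x (nbrs n E j) \<and> x' j = v"
      then obtain x' where "x' \<in> messages n t" "enc x' = enc x" "restrict x' (nbrs n E j) = restrict x (nbrs n E j)" "x' j = v"
        by blast
      then show "v = x j" using key[OF x _ j] by blast
    qed
  qed
  moreover have "card P = p^(3*m)" by (simp add: P_def cardY)
  ultimately show ?thesis by blast
qed



lemma exists_good_t:
  fixes p :: nat and \<epsilon> :: real
  assumes p: "p \<ge> 2" and e: "\<epsilon> > 0"
  shows "\<exists>t m. t \<ge> 1 \<and> (2::nat)^t \<le> p^m \<and> real (nat \<lceil>log 2 (real (p^(3*m)))\<rceil>) / real t < 3 + \<epsilon>"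
proof -
  define L where "L = log 2 (real p)"
  have L1: "L \<ge> 1" unfolding L_def using p by simp
  obtain t :: nat where t: "real t > (3*L+1)/\<epsilon>" "t \<ge> 1"
  proof -
    obtain t0 :: nat where "real t0 > (3*L+1)/\<epsilon>" using reals_Archimedean2 by blast
    then show ?thesis using that[of "t0+1"] by simp
  qed
  define m where "m = nat \<lceil>real t / L\<rceil>"
  have nn: "real t / L \<ge> 0" using L1 by simp
  have cc: "real_of_int \<lceil>real t / L\<rceil> - 1 < real t / L \<and> real t / L \<le> real_of_int \<lceil>real t / L\<rceil>"
    by (rule ceiling_correct)
  have mm: "real m = real_of_int \<lceil>real t / L\<rceil>" unfolding m_def using nn by simp
  have m1: "real m \<ge> real t / L" using cc mm by linarith
  have m2: "real m < real t / L + 1" using cc mm by linarith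
  have mL: "real m * L \<ge> real t" using m1 L1 by (simp add: field_simps)
  have pL: "real p = 2 powr L" unfolding L_def using p by simp
  have "real (p^m) = 2 powr (real m * L)"
    by (simp add: pL powr_realpow[symmetric] powr_powr mult.commute)
  also have "\<dots> \<ge> 2 powr (real t)" using mL by simp
  finally have "real (2^t) \<le> real (p^m)" by (simp add: powr_realpow)
  then have tm: "(2::nat)^t \<le> p^m" by linarith
  have lg: "log 2 (real (p^(3*m))) = 3 * real m * L"
    unfolding L_def using p by (simp add: log_nat_power)
  have "real (nat \<lceil>log 2 (real (p^(3*m)))\<rceil>) \<le> 3 * real m * L + 1"
  proof -
    have nn2: "3 * real m * L \<ge> 0" using L1 by simp
    have "real_of_int \<lceil>3 * real m * L\<rceil> - 1 < 3 * real m * L" using ceiling_correct by blast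
    moreover have "real (nat \<lceil>3 * real m * L\<rceil>) = real_of_int \<lceil>3 * real m * L\<rceil>" using nn2 by simp
    ultimately show ?thesis unfolding lg by linarith
  qed
  also have "\<dots> < 3 * real t + 3 * L + 1"
    using m2 L1 by (simp add: field_simps)
  finally have a: "real (nat \<lceil>log 2 (real (p^(3*m)))\<rceil>) < 3 * real t + (3 * L + 1)" by simp
  have "(3 * L + 1) < \<epsilon> * real t" using t(1) e by (simp add: field_simps)
  with a have "real (nat \<lceil>log 2 (real (p^(3*m)))\<rceil>) < (3 + \<epsilon>) * real t" by (simp add: algebra_simps)
  then have "real (nat \<lceil>log 2 (real (p^(3*m)))\<rceil>) / real t < 3 + \<epsilon>"
    using t(2) by (simp add: divide_less_eq)
  then show ?thesis using t(2) tm by blast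
qed

lemma card_lower_triple:
  assumes sg: "simple_graph n E"
    and i: "i1 < n" "i2 < n" "i3 < n" "i1 \<noteq> i2" "i1 \<noteq> i3" "i2 \<noteq> i3"
    and na: "\<not> E i1 i2" "\<not> E i1 i3" "\<not> E i2 i3"
    and sol: "ic_solution n E t P enc"
  shows "2^(3*t) \<le> card P"
proof -
  from sol obtain dec where finP: "finite P" and encP: "enc ` messages n t \<subseteq> P"
    and dec: "\<forall>x\<in>messages n t. \<forall>i<n. dec i (enc x) (restrict x (nbrs n E i)) = x i"
    unfolding ic_solution_def by blast
  have irr: "\<not> E a a" for a using sg unfolding simple_graph_def by blast
  have sym: "E a b \<Longrightarrow> E b a" for a b using sg unfolding simple_graph_def by blast
  define msg where "msg = (\<lambda>(a::nat,b::nat,c::nat). restrict (\<lambda>i. if i = i1 then a else if i = i2 then b else if i = i3 then c else 0) {0..<n})"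
  define T where "T = {0..<(2::nat)^t} \<times> {0..<(2::nat)^t} \<times> {0..<(2::nat)^t}"
  have msgM: "msg u \<in> messages n t" if "u \<in> T" for u
    using that unfolding msg_def T_def messages_def by (auto simp: PiE_iff)
  have nb: "restrict (msg u) (nbrs n E r) = restrict (msg v) (nbrs n E r)"
    if "r \<in> {i1,i2,i3}" for u v r
  proof
    fix i show "restrict (msg u) (nbrs n E r) i = restrict (msg v) (nbrs n E r) i"
    proof (cases "i \<in> nbrs n E r")
      case True
      then have "E r i" "i < n" by (auto simp: nbrs_def)
      then have "i \<noteq> i1" "i \<noteq> i2" "i \<noteq> i3"
        using that irr sym na by blast+
      then show ?thesis using True \<open>i < n\<close> by (simp add: msg_def split: prod.splits)
    qed simp
  qed
  have inj: "inj_on (enc \<circ> msg) T"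
  proof (rule inj_onI)
    fix u v assume u: "u \<in> T" and v: "v \<in> T" and e: "(enc \<circ> msg) u = (enc \<circ> msg) v"
    have val: "msg u r = msg v r" if r: "r \<in> {i1,i2,i3}" for r
    proof -
      have rn: "r < n" using r i by auto
      have "msg u r = dec r (enc (msg u)) (restrict (msg u) (nbrs n E r))" using dec msgM[OF u] rn by simp
      also have "\<dots> = dec r (enc (msg v)) (restrict (msg v) (nbrs n E r))" using e nb[OF r, of u v] by simp
      also have "\<dots> = msg v r" using dec msgM[OF v] rn by simp
      finally show ?thesis .
    qed
    obtain a b c where uu: "u = (a,b,c)" by (cases u) auto
    obtain a' b' c' where vv: "v = (a',b',c')" by (cases v) auto
    have "a = a'" using val[of i1] i by (simp add: msg_def uu vv)
    moreover have "b = b'" using val[of i2] i by (simp add: msg_def uu vv)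
    moreover have "c = c'" using val[of i3] i by (simp add: msg_def uu vv)
    ultimately show "u = v" using uu vv by simp
  qed
  have "(enc \<circ> msg) ` T \<subseteq> P" using encP msgM by auto
  then have "card T \<le> card P" using card_inj_on_le[OF inj _ finP] by blast
  moreover have "card T = 2^(3*t)" unfolding T_def by (simp add: card_cartesian_product power_add[symmetric])
  ultimately show ?thesis by simp
qed

lemma beta_eq_3:
  fixes p :: nat and U W :: "nat \<Rightarrow> nat \<Rightarrow> int"
  assumes p: "prime p"
    and selfB: "\<forall>i<n. \<not> int p dvd Bf U W i i"
    and nonadj: "\<forall>i<n. \<forall>j<n. i \<noteq> j \<longrightarrow> \<not> E j i \<longrightarrow> int p dvd Bf U W i j"
    and sg: "simple_graph n E"
    and i: "i1 < n" "i2 < n" "i3 < n" "i1 \<noteq> i2" "i1 \<noteq> i3" "i2 \<noteq> i3"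
    and na: "\<not> E i1 i2" "\<not> E i1 i3" "\<not> E i2 i3"
  shows "beta n E = 3"
proof -
  have p2: "p \<ge> 2" using p prime_ge_2_nat by blast
  have lowt: "3 * t \<le> beta_t n E t" for t
  proof -
    have "(2::nat)^t \<le> p^t" using p2 by (simp add: power_mono)
    then obtain P0 enc0 where s0: "ic_solution n E t P0 enc0"
      using code_exists[OF p selfB nonadj] by blast
    show ?thesis unfolding beta_t_def
    proof (rule cInf_greatest)
      show "{nat \<lceil>log 2 (real (card P))\<rceil> |P enc. ic_solution n E t P enc} \<noteq> {}" using s0 by blast
    next
      fix y assume "y \<in> {nat \<lceil>log 2 (real (card P))\<rceil> |P enc. ic_solution n E t P enc}"
      then obtain P enc where y: "y = nat \<lceil>log 2 (real (card P))\<rceil>" and s: "ic_solution n E t P enc" by blast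
      have c: "2^(3*t) \<le> card P" using card_lower_triple[OF sg i na s] .
      have "real (3*t) = log 2 (2^(3*t))" by (simp add: log_nat_power)
      also have "\<dots> \<le> log 2 (real (card P))"
      proof -
        have "real ((2::nat)^(3*t)) \<le> real (card P)" using c by linarith
        have "(0::nat) < 2^(3*t)" by simp
        with c have "0 < card P" by linarith
        then have "(0::real) < real (card P)" by simp
        with \<open>real ((2::nat)^(3*t)) \<le> real (card P)\<close> show ?thesis by (subst log_le_cancel_iff) auto
      qed
      finally have "real (3*t) \<le> log 2 (real (card P))" .
      then show "3 * t \<le> y" unfolding y by linarith
    qed
  qed
  have low: "3 \<le> real (beta_t n E t) / real t" if "t \<in> {1..}" for t
    using lowt[of t] that by (simp add: le_divide_eq)
  have bdd: "bdd_below ((\<lambda>t. real (beta_t n E t) / real t) ` {1..})"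
    by (rule bdd_belowI[of _ 0]) auto
  have ge: "3 \<le> beta n E" unfolding beta_def
    by (rule cINF_greatest) (use low in auto)
  have le: "beta n E \<le> 3"
  proof (rule ccontr)
    assume "\<not> beta n E \<le> 3"
    then have e: "beta n E - 3 > 0" by simp
    obtain t m where tm: "t \<ge> 1" "(2::nat)^t \<le> p^m"
      and r: "real (nat \<lceil>log 2 (real (p^(3*m)))\<rceil>) / real t < 3 + (beta n E - 3)"
      using exists_good_t[OF p2 e] by blast
    obtain P enc where s: "ic_solution n E t P enc" "card P = p^(3*m)"
      using code_exists[OF p selfB nonadj tm(2)] by blast
    have "beta_t n E t \<le> nat \<lceil>log 2 (real (p^(3*m)))\<rceil>"
      unfolding beta_t_def
    proof (rule cInf_lower)
      show "nat \<lceil>log 2 (real (p ^ (3 * m)))\<rceil> \<in> {nat \<lceil>log 2 (real (card P))\<rceil> |P enc. ic_solution n E t P enc}"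
        using s by (metis (mono_tags, lifting) mem_Collect_eq)
    qed simp
    then have "real (beta_t n E t) / real t \<le> real (nat \<lceil>log 2 (real (p^(3*m)))\<rceil>) / real t"
      by (simp add: divide_right_mono)
    also have "\<dots> < beta n E" using r by simp
    finally have "real (beta_t n E t) / real t < beta n E" .
    moreover have "beta n E \<le> real (beta_t n E t) / real t" unfolding beta_def
      by (rule cINF_lower[OF bdd]) (use tm in simp)
    ultimately show False by simp
  qed
  show ?thesis using ge le by simp
qed



lemma cs_sum:
  fixes f :: "'a \<Rightarrow> real"
  assumes "finite D"
  shows "(\<Sum>x\<in>D. f x)^2 \<le> real (card D) * (\<Sum>x\<in>D. (f x)^2)"
proof -
  have "0 \<le> (\<Sum>x\<in>D. \<Sum>y\<in>D. (f x - f y)^2)" by (intro sum_nonneg) auto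
  also have "\<dots> = (\<Sum>x\<in>D. \<Sum>y\<in>D. (f x)^2 + (f y)^2 - 2 * (f x * f y))"
    by (simp add: power2_diff mult.assoc)
  also have "\<dots> = 2 * (real (card D) * (\<Sum>x\<in>D. (f x)^2)) - 2 * (\<Sum>x\<in>D. f x)^2"
    by (simp add: sum.distrib sum_subtractf sum_distrib_left sum_distrib_right power2_eq_square
        sum.swap[of "\<lambda>x y. f y * f y"] algebra_simps)
  finally show ?thesis by simp
qed

lemma int_range_dvd_eq:
  fixes p u v :: int
  assumes "0 \<le> u" "u < p" "0 \<le> v" "v < p" "p dvd u - v"
  shows "u = v"
proof (rule ccontr)
  assume "u \<noteq> v"
  then have "u - v \<noteq> 0" by simp
  then have "\<bar>p\<bar> \<le> \<bar>u - v\<bar>" using dvd_imp_le_int assms(5) by blast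
  with assms(1-4) show False by linarith
qed

lemma uniq_sum:
  fixes p v :: int
  assumes p: "0 < p"
  shows "(\<Sum>\<beta>\<in>{0..<p}. of_bool (p dvd (\<beta> - v)) :: real) = 1"
proof -
  have "{0..<p} \<inter> {\<beta>. p dvd (\<beta> - v)} = {v mod p}"
  proof (intro equalityI subsetI)
    fix \<beta> assume "\<beta> \<in> {0..<p} \<inter> {\<beta>. p dvd (\<beta> - v)}"
    then have b: "0 \<le> \<beta>" "\<beta> < p" "p dvd \<beta> - v" by auto
    have "p dvd \<beta> - v mod p" using b(3)
      by (metis dvd_add_left_iff dvd_minus_mod minus_diff_eq diff_add_cancel add.commute diff_diff_eq2)
    then have "\<beta> = v mod p" using int_range_dvd_eq[OF b(1,2)] p by simp
    then show "\<beta> \<in> {v mod p}" by simp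
  next
    fix \<beta> assume "\<beta> \<in> {v mod p}"
    then show "\<beta> \<in> {0..<p} \<inter> {\<beta>. p dvd (\<beta> - v)}" using p
      by (simp add: mod_eq_dvd_iff[symmetric] )
  qed
  then show ?thesis by simp
qed

definition inT :: "int \<Rightarrow> (int \<times> int) + int \<Rightarrow> int \<times> int \<Rightarrow> bool" where
  "inT p z x = (case z of Inl q \<Rightarrow> p dvd (snd q + (fst x)^2 + snd x - 2 * fst x * fst q)
                         | Inr \<beta> \<Rightarrow> p dvd (\<beta> - 2 * fst x))"

definition Zt :: "int \<Rightarrow> ((int \<times> int) + int) set" where
  "Zt p = Inl ` ({0..<p} \<times> {0..<p}) \<union> Inr ` {0..<p}"

lemma finite_Zt: "finite (Zt p)" by (simp add: Zt_def)

lemma sum_Zt: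
  "(\<Sum>z\<in>Zt p. h z) = (\<Sum>q\<in>{0..<p} \<times> {0..<p}. h (Inl q)) + (\<Sum>\<beta>\<in>{0..<p}. h (Inr \<beta>))"
proof -
  have "(\<Sum>z\<in>Zt p. h z) = (\<Sum>z\<in>Inl ` ({0..<p} \<times> {0..<p}). h z) + (\<Sum>z\<in>Inr ` {0..<p}. h z)"
    unfolding Zt_def by (rule sum.union_disjoint) auto
  also have "\<dots> = (\<Sum>q\<in>{0..<p} \<times> {0..<p}. h (Inl q)) + (\<Sum>\<beta>\<in>{0..<p}. h (Inr \<beta>))"
    by (simp add: sum.reindex)
  finally show ?thesis .
qed

lemma card_Zt: "0 \<le> p \<Longrightarrow> real (card (Zt p)) = real_of_int p * real_of_int p + real_of_int p"
proof -
  assume p: "0 \<le> p"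
  have "real (card (Zt p)) = (\<Sum>z\<in>Zt p. 1)" by simp
  also have "\<dots> = real_of_int p * real_of_int p + real_of_int p"
    unfolding sum_Zt using p by simp
  finally show ?thesis .
qed

lemma F1:
  fixes p :: int
  assumes p: "0 < p"
  shows "(\<Sum>z\<in>Zt p. of_bool (inT p z x) :: real) = real_of_int p + 1"
proof -
  obtain a c where x: "x = (a,c)" by (cases x)
  have "(\<Sum>q\<in>{0..<p} \<times> {0..<p}. of_bool (inT p (Inl q) x) :: real)
        = (\<Sum>\<alpha>\<in>{0..<p}. \<Sum>\<beta>\<in>{0..<p}. of_bool (p dvd (\<beta> - (2*a*\<alpha> - a^2 - c))))"
  proof -
    have "(\<Sum>q\<in>{0..<p} \<times> {0..<p}. of_bool (inT p (Inl q) x) :: real)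
        = (\<Sum>\<alpha>\<in>{0..<p}. \<Sum>\<beta>\<in>{0..<p}. of_bool (inT p (Inl (\<alpha>,\<beta>)) x))"
      by (subst sum.cartesian_product) (simp add: split_def)
    also have "\<dots> = (\<Sum>\<alpha>\<in>{0..<p}. \<Sum>\<beta>\<in>{0..<p}. of_bool (p dvd (\<beta> - (2*a*\<alpha> - a^2 - c))))"
    proof (intro sum.cong refl)
      fix \<alpha> \<beta>
      have eq: "\<beta> + a^2 + c - 2 * a * \<alpha> = \<beta> - (2*a*\<alpha> - a^2 - c)" by (simp add: algebra_simps)
      show "(of_bool (inT p (Inl (\<alpha>,\<beta>)) x) :: real) = of_bool (p dvd (\<beta> - (2*a*\<alpha> - a^2 - c)))"
        by (simp only: inT_def x sum.case prod.sel eq)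
    qed
    finally show ?thesis .
  qed
  also have "\<dots> = (\<Sum>\<alpha>\<in>{0..<p}. (1::real))" by (intro sum.cong refl uniq_sum[OF p])
  also have "\<dots> = real_of_int p" using p by simp
  finally have A: "(\<Sum>q\<in>{0..<p} \<times> {0..<p}. of_bool (inT p (Inl q) x) :: real) = real_of_int p" .
  have B: "(\<Sum>\<beta>\<in>{0..<p}. of_bool (inT p (Inr \<beta>) x) :: real) = 1"
    using uniq_sum[OF p, of "2*a"] by (simp add: x inT_def)
  show ?thesis unfolding sum_Zt A B ..
qed

lemma dvd_trans_eq: "(p::int) dvd X \<Longrightarrow> X = Y \<Longrightarrow> p dvd Y" by simp

lemma prime_not_dvd2:
  fixes p :: int assumes "p > 2" shows "\<not> p dvd 2"
  using assms zdvd_imp_le by fastforce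

lemma dvd_2_times:
  fixes p :: int assumes "prime p" "p > 2" "p dvd 2 * u" shows "p dvd u"
  using assms prime_dvd_mult_iff prime_not_dvd2 by blast

lemma uniq_tests:
  fixes p a c a' c' :: int
  assumes p: "prime p" "p > 2"
    and bx: "0 \<le> a" "a < p" "1 \<le> c" "c < p" and by': "0 \<le> a'" "a' < p" "1 \<le> c'" "c' < p"
    and ne: "(a,c) \<noteq> (a',c')"
    and z1: "z1 \<in> Zt p" "inT p z1 (a,c)" "inT p z1 (a',c')"
    and z2: "z2 \<in> Zt p" "inT p z2 (a,c)" "inT p z2 (a',c')"
  shows "z1 = z2"
proof -
  have Inr_aa: "a = a'" if "inT p (Inr \<gamma>) (a,c)" "inT p (Inr \<gamma>) (a',c')" for \<gamma>
  proof -
    from that have "p dvd \<gamma> - 2*a" "p dvd \<gamma> - 2*a'" by (simp_all add: inT_def)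
    then have "p dvd (\<gamma> - 2*a) - (\<gamma> - 2*a')" by (rule dvd_diff)
    then have "p dvd 2 * (a' - a)" by (rule dvd_trans_eq) (simp add: algebra_simps)
    then have "p dvd a' - a" using dvd_2_times p by blast
    then show ?thesis using int_range_dvd_eq[of a' p a] bx by' by simp
  qed
  have Inl_ne: "a \<noteq> a'" if "inT p (Inl q) (a,c)" "inT p (Inl q) (a',c')" for q
  proof
    assume aa: "a = a'"
    obtain \<alpha> \<beta> where q: "q = (\<alpha>,\<beta>)" by (cases q)
    from that have "p dvd \<beta> + a^2 + c - 2*a*\<alpha>" "p dvd \<beta> + a'^2 + c' - 2*a'*\<alpha>"
      by (simp_all add: inT_def q)
    then have "p dvd (\<beta> + a^2 + c - 2*a*\<alpha>) - (\<beta> + a'^2 + c' - 2*a'*\<alpha>)" by (rule dvd_diff)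
    then have "p dvd c - c'" by (rule dvd_trans_eq) (simp add: aa algebra_simps)
    then have "c = c'" using int_range_dvd_eq[of c p c'] bx by' by simp
    with aa ne show False by simp
  qed
  show ?thesis
  proof (cases z1)
    case (Inl q1)
    then have ane: "a \<noteq> a'" using Inl_ne z1 by blast
    show ?thesis
    proof (cases z2)
      case (Inl q2)
      obtain \<alpha>1 \<beta>1 where q1: "q1 = (\<alpha>1,\<beta>1)" by (cases q1)
      obtain \<alpha>2 \<beta>2 where q2: "q2 = (\<alpha>2,\<beta>2)" by (cases q2)
      have r1: "0 \<le> \<alpha>1" "\<alpha>1 < p" "0 \<le> \<beta>1" "\<beta>1 < p" using z1(1) \<open>z1 = Inl q1\<close> q1 by (auto simp: Zt_def)
      have r2: "0 \<le> \<alpha>2" "\<alpha>2 < p" "0 \<le> \<beta>2" "\<beta>2 < p" using z2(1) Inl q2 by (auto simp: Zt_def)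
      have E1: "p dvd \<beta>1 + a^2 + c - 2*a*\<alpha>1" and E2: "p dvd \<beta>1 + a'^2 + c' - 2*a'*\<alpha>1"
        using z1 \<open>z1 = Inl q1\<close> q1 by (simp_all add: inT_def)
      have E3: "p dvd \<beta>2 + a^2 + c - 2*a*\<alpha>2" and E4: "p dvd \<beta>2 + a'^2 + c' - 2*a'*\<alpha>2"
        using z2 Inl q2 by (simp_all add: inT_def)
      have "p dvd ((\<beta>1 + a^2 + c - 2*a*\<alpha>1) - (\<beta>2 + a^2 + c - 2*a*\<alpha>2))
                 - ((\<beta>1 + a'^2 + c' - 2*a'*\<alpha>1) - (\<beta>2 + a'^2 + c' - 2*a'*\<alpha>2))"
        using dvd_diff[OF dvd_diff[OF E1 E3] dvd_diff[OF E2 E4]] .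
      then have "p dvd 2 * ((a' - a) * (\<alpha>1 - \<alpha>2))" by (rule dvd_trans_eq) (simp add: algebra_simps)
      then have "p dvd (a' - a) * (\<alpha>1 - \<alpha>2)" using dvd_2_times p by blast
      moreover have "\<not> p dvd (a' - a)"
        using int_range_dvd_eq[of a' p a] bx by' ane by auto
      ultimately have "p dvd \<alpha>1 - \<alpha>2" using prime_dvd_mult_iff p(1) by blast
      then have al: "\<alpha>1 = \<alpha>2" using int_range_dvd_eq r1 r2 by blast
      have "p dvd (\<beta>1 + a^2 + c - 2*a*\<alpha>1) - (\<beta>2 + a^2 + c - 2*a*\<alpha>2)" using E1 E3 by (rule dvd_diff)
      then have "p dvd \<beta>1 - \<beta>2" by (rule dvd_trans_eq) (simp add: al algebra_simps)
      then have "\<beta>1 = \<beta>2" using int_range_dvd_eq r1 r2 by blast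
      then show ?thesis using al \<open>z1 = Inl q1\<close> Inl q1 q2 by simp
    next
      case (Inr \<gamma>)
      then have "a = a'" using Inr_aa z2 by blast
      with ane show ?thesis by simp
    qed
  next
    case (Inr \<gamma>1)
    then have aa: "a = a'" using Inr_aa z1 by blast
    show ?thesis
    proof (cases z2)
      case (Inl q2)
      then have "a \<noteq> a'" using Inl_ne z2 by blast
      with aa show ?thesis by simp
    next
      case (Inr \<gamma>2)
      have r1: "0 \<le> \<gamma>1" "\<gamma>1 < p" using z1(1) \<open>z1 = Inr \<gamma>1\<close> by (auto simp: Zt_def)
      have r2: "0 \<le> \<gamma>2" "\<gamma>2 < p" using z2(1) Inr by (auto simp: Zt_def)
      have "p dvd (\<gamma>1 - 2*a) - (\<gamma>2 - 2*a)"
      proof (rule dvd_diff)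
        show "p dvd \<gamma>1 - 2*a" using z1 \<open>z1 = Inr \<gamma>1\<close> by (simp add: inT_def)
        show "p dvd \<gamma>2 - 2*a" using z2 Inr by (simp add: inT_def)
      qed
      then have "p dvd \<gamma>1 - \<gamma>2" by (rule dvd_trans_eq) simp
      then have "\<gamma>1 = \<gamma>2" using int_range_dvd_eq r1 r2 by blast
      then show ?thesis using \<open>z1 = Inr \<gamma>1\<close> Inr by simp
    qed
  qed
qed

lemma pair_le1:
  fixes p :: int
  assumes p: "prime p" "p > 2"
    and x: "0 \<le> fst x" "fst x < p" "1 \<le> snd x" "snd x < p"
    and y: "0 \<le> fst y" "fst y < p" "1 \<le> snd y" "snd y < p"
    and ne: "x \<noteq> y"
  shows "(\<Sum>z\<in>Zt p. of_bool (inT p z x) * of_bool (inT p z y) :: real) \<le> 1"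
proof -
  have "(\<Sum>z\<in>Zt p. of_bool (inT p z x) * of_bool (inT p z y) :: real) = (\<Sum>z\<in>Zt p. of_bool (inT p z x \<and> inT p z y))"
    by (intro sum.cong refl) simp
  also have "\<dots> = real (card (Zt p \<inter> {z. inT p z x \<and> inT p z y}))"
    using finite_Zt by simp
  also have "\<dots> \<le> 1"
  proof -
    obtain a c where xx: "x = (a,c)" by (cases x)
    obtain a' c' where yy: "y = (a',c')" by (cases y)
    have "card (Zt p \<inter> {z. inT p z x \<and> inT p z y}) \<le> Suc 0"
    proof (subst card_le_Suc0_iff_eq)
      show "finite (Zt p \<inter> {z. inT p z x \<and> inT p z y})" using finite_Zt by simp
      show "\<forall>z1\<in>Zt p \<inter> {z. inT p z x \<and> inT p z y}. \<forall>z2\<in>Zt p \<inter> {z. inT p z x \<and> inT p z y}. z1 = z2"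
        using uniq_tests[OF p, of a c a' c'] x y ne xx yy by auto
    qed
    then show ?thesis by simp
  qed
  finally show ?thesis .
qed

lemma clique_bound:
  fixes p :: int and S :: "(int \<times> int) set"
  assumes p: "prime p" "p > 2"
    and box: "\<forall>x\<in>S. 0 \<le> fst x \<and> fst x < p \<and> 1 \<le> snd x \<and> snd x < p"
    and cl: "\<forall>x\<in>S. \<forall>y\<in>S. x \<noteq> y \<longrightarrow> \<not> p dvd ((fst x - fst y)^2 + snd x + snd y)"
  shows "real (card S)^2 \<le> (real_of_int p)^2 * (real_of_int p + 1)"
proof -
  have finS: "finite S"
  proof (rule finite_subset)
    show "S \<subseteq> {0..<p} \<times> {1..<p}" using box by (auto simp: mem_Times_iff)
  qed simp
  define P where "P = real_of_int p"
  define s where "s = real (card S)"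
  have p0: "0 < p" using p by simp
  define I where "I z x = (of_bool (inT p z x) :: real)" for z x
  define d where "d z = (\<Sum>x\<in>S. I z x)" for z
  have A: "(\<Sum>z\<in>Zt p. d z) = s * (P + 1)"
  proof -
    have "(\<Sum>z\<in>Zt p. d z) = (\<Sum>x\<in>S. \<Sum>z\<in>Zt p. I z x)"
      unfolding d_def by (rule sum.swap)
    also have "\<dots> = (\<Sum>x\<in>S. P + 1)"
    proof (intro sum.cong refl)
      fix x show "(\<Sum>z\<in>Zt p. I z x) = P + 1" unfolding I_def P_def by (rule F1[OF p0])
    qed
    finally show ?thesis by (simp add: s_def)
  qed
  have B: "(\<Sum>z\<in>Zt p. (d z)^2) \<le> s^2 + s * P"
  proof -
    have "(\<Sum>z\<in>Zt p. (d z)^2) = (\<Sum>z\<in>Zt p. \<Sum>x\<in>S. \<Sum>y\<in>S. I z x * I z y)"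
      unfolding d_def power2_eq_square sum_product ..
    also have "\<dots> = (\<Sum>x\<in>S. \<Sum>z\<in>Zt p. \<Sum>y\<in>S. I z x * I z y)"
      by (rule sum.swap)
    also have "\<dots> = (\<Sum>x\<in>S. \<Sum>y\<in>S. \<Sum>z\<in>Zt p. I z x * I z y)"
      by (intro sum.cong refl) (rule sum.swap)
    also have "\<dots> \<le> (\<Sum>x\<in>S. (P + 1) + (s - 1))"
    proof (rule sum_mono)
      fix x assume xS: "x \<in> S"
      have bx: "0 \<le> fst x" "fst x < p" "1 \<le> snd x" "snd x < p" using box xS by auto
      have r: "(\<Sum>y\<in>S. \<Sum>z\<in>Zt p. I z x * I z y) = (\<Sum>z\<in>Zt p. I z x * I z x) + (\<Sum>y\<in>S - {x}. \<Sum>z\<in>Zt p. I z x * I z y)"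
        using finS xS by (rule sum.remove)
      have r1: "(\<Sum>z\<in>Zt p. I z x * I z x) = P + 1"
      proof -
        have "(\<Sum>z\<in>Zt p. I z x * I z x) = (\<Sum>z\<in>Zt p. I z x)" by (intro sum.cong refl) (simp add: I_def)
        also have "\<dots> = P + 1" unfolding I_def P_def by (rule F1[OF p0])
        finally show ?thesis .
      qed
      have r2: "(\<Sum>y\<in>S - {x}. \<Sum>z\<in>Zt p. I z x * I z y) \<le> (\<Sum>y\<in>S - {x}. 1)"
      proof (rule sum_mono)
        fix y assume yS: "y \<in> S - {x}"
        have by': "0 \<le> fst y" "fst y < p" "1 \<le> snd y" "snd y < p" using box yS by auto
        have "x \<noteq> y" using yS by auto
        then show "(\<Sum>z\<in>Zt p. I z x * I z y) \<le> 1"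
          unfolding I_def by (rule pair_le1[OF p bx by'])
      qed
      have "0 < card S" using finS xS by (auto simp: card_gt_0_iff)
      have r3: "(\<Sum>y\<in>S - {x}. (1::real)) = s - 1"
      proof -
        have "(\<Sum>y\<in>S - {x}. (1::real)) = real (card (S - {x}))" by simp
        also have "card (S - {x}) = card S - 1" using xS by (rule card_Diff_singleton)
        finally show ?thesis using \<open>0 < card S\<close> by (simp add: s_def of_nat_diff)
      qed
      show "(\<Sum>y\<in>S. \<Sum>z\<in>Zt p. I z x * I z y) \<le> (P + 1) + (s - 1)"
        using r r1 r2 r3 by linarith
    qed
    also have "\<dots> = s * (P + s)" by (simp add: s_def algebra_simps)
    finally show ?thesis by (simp add: power2_eq_square algebra_simps)
  qed
  define zs where "zs y = (Inl (fst y, ((fst y)^2 + snd y) mod p) :: (int\<times>int) + int)" for y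
  have zsZ: "zs y \<in> Zt p" if "y \<in> S" for y
    using that box p0 by (auto simp: zs_def Zt_def)
  have zs_not: "\<not> inT p (zs y) x" if "y \<in> S" "x \<in> S" for x y
  proof
    assume "inT p (zs y) x"
    then have h: "p dvd ((fst y)^2 + snd y) mod p + (fst x)^2 + snd x - 2 * fst x * fst y"
      by (simp add: inT_def zs_def)
    have "p dvd (((fst y)^2 + snd y) mod p + (fst x)^2 + snd x - 2 * fst x * fst y)
             + p * (((fst y)^2 + snd y) div p)"
      using h by simp
    then have "p dvd (fst x - fst y)^2 + snd x + snd y"
      by (rule dvd_trans_eq) (simp add: power2_eq_square algebra_simps mod_div_mult_eq minus_mod_eq_mult_div[symmetric])
    show False
    proof (cases "x = y")
      case True
      with \<open>p dvd (fst x - fst y)^2 + snd x + snd y\<close> have "p dvd 2 * snd x" by simp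
      then have "p dvd snd x" using dvd_2_times p by blast
      moreover have "1 \<le> snd x" "snd x < p" using box that by auto
      ultimately show False using zdvd_imp_le by fastforce
    next
      case False
      then show False using cl that \<open>p dvd (fst x - fst y)^2 + snd x + snd y\<close> by blast
    qed
  qed
  have d0: "d (zs y) = 0" if "y \<in> S" for y
    unfolding d_def I_def using zs_not[OF that] by simp
  have injzs: "inj_on zs S"
  proof (rule inj_onI)
    fix x y assume xS: "x \<in> S" and yS: "y \<in> S" and e: "zs x = zs y"
    then have f: "fst x = fst y" and m: "((fst x)^2 + snd x) mod p = ((fst y)^2 + snd y) mod p"
      by (auto simp: zs_def)
    from m f have "p dvd ((fst y)^2 + snd x) - ((fst y)^2 + snd y)" by (simp add: mod_eq_dvd_iff)
    then have "p dvd snd x - snd y" by simp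
    moreover have "1 \<le> snd x" "snd x < p" "1 \<le> snd y" "snd y < p" using box xS yS by auto
    ultimately have "snd x = snd y" using int_range_dvd_eq[of "snd x" p "snd y"] by auto
    with f show "x = y" by (simp add: prod_eq_iff)
  qed
  define D where "D = Zt p - zs ` S"
  have sub: "zs ` S \<subseteq> Zt p" using zsZ by auto
  have sumD: "(\<Sum>z\<in>D. d z) = (\<Sum>z\<in>Zt p. d z)"
    unfolding D_def by (rule sum.mono_neutral_left) (use finite_Zt d0 in auto)
  have sumD2: "(\<Sum>z\<in>D. (d z)^2) = (\<Sum>z\<in>Zt p. (d z)^2)"
    unfolding D_def by (rule sum.mono_neutral_left) (use finite_Zt d0 in auto)
  have cardD: "real (card D) = P * P + P - s"
  proof -
    have "card D = card (Zt p) - card (zs ` S)"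
      unfolding D_def using finite_Zt sub by (simp add: card_Diff_subset finite_subset)
    moreover have "card (zs ` S) = card S" using injzs by (rule card_image)
    moreover have "card (zs ` S) \<le> card (Zt p)" using sub finite_Zt by (rule card_mono[rotated])
    ultimately have "real (card D) = real (card (Zt p)) - real (card S)" by simp
    then show ?thesis using card_Zt[of p] p0 by (simp add: P_def s_def)
  qed
  have finD: "finite D" unfolding D_def using finite_Zt by simp
  have cs: "(s * (P + 1))^2 \<le> (P * P + P - s) * (s^2 + s * P)"
  proof -
    have "(s * (P + 1))^2 = (\<Sum>z\<in>D. d z)^2" using A sumD by simp
    also have "\<dots> \<le> real (card D) * (\<Sum>z\<in>D. (d z)^2)" using cs_sum[OF finD] .
    also have "\<dots> \<le> (P * P + P - s) * (s^2 + s * P)"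
    proof -
      have "0 \<le> real (card D)" by simp
      then show ?thesis using B sumD2 cardD by (simp add: mult_left_mono)
    qed
    finally show ?thesis .
  qed
  have P2: "P > 2" using p by (simp add: P_def)
  have s0: "s \<ge> 0" by (simp add: s_def)
  show ?thesis
  proof (cases "s = 0")
    case True then show ?thesis using P2 by (simp add: s_def[symmetric] P_def[symmetric])
  next
    case False
    then have spos: "s > 0" using s0 by simp
    have "s * (s * (P + 1)^2) \<le> s * ((P * P + P - s) * (s + P))"
      using cs by (simp add: power2_eq_square algebra_simps)
    then have "s * (P + 1)^2 \<le> (P * P + P - s) * (s + P)"
      using spos by simp
    then have "s * s \<le> P * P * (P + 1) - 2 * s * P - s"
      by (simp add: power2_eq_square algebra_simps)
    then have "s * s \<le> P * P * (P + 1)" using spos P2 by (smt (verit) mult_pos_pos)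
    then show ?thesis by (simp add: s_def[symmetric] P_def[symmetric] power2_eq_square)
  qed
qed



definition LL :: "nat \<Rightarrow> nat" where "LL p = p div 4"
definition nV :: "nat \<Rightarrow> nat" where "nV p = p * LL p + 3"

definition vv :: "nat \<Rightarrow> nat \<Rightarrow> nat \<Rightarrow> int" where
  "vv p i k = (if i < p * LL p then [1, int (i mod p), (int (i mod p))^2 + int (i div p) + 1] ! k
     else if i = p * LL p then [0,1,0] ! k else if i = p * LL p + 1 then [1,0,1] ! k else [1,0,-1] ! k)"

definition ww :: "nat \<Rightarrow> nat \<Rightarrow> nat \<Rightarrow> int" where
  "ww p j k = [vv p j 2, -2 * vv p j 1, vv p j 0] ! k"

definition Gr :: "nat \<Rightarrow> nat \<Rightarrow> nat \<Rightarrow> bool" where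
  "Gr p i j = (i < nV p \<and> j < nV p \<and> i \<noteq> j \<and> \<not> int p dvd Bf (vv p) (ww p) i j)"

lemma Bf_expand: "Bf U W i j = W j 0 * U i 0 + W j 1 * U i 1 + W j 2 * U i 2"
  by (simp add: Bf_def eval_nat_numeral)

lemma Bf_vv: "Bf (vv p) (ww p) i j = vv p j 2 * vv p i 0 - 2 * (vv p j 1 * vv p i 1) + vv p j 0 * vv p i 2"
  unfolding Bf_expand by (simp add: ww_def)

lemma Bf_sym: "Bf (vv p) (ww p) i j = Bf (vv p) (ww p) j i"
  unfolding Bf_vv by (simp add: algebra_simps)

lemma Bf_V:
  assumes "i < p * LL p" "j < p * LL p"
  shows "Bf (vv p) (ww p) i j = (int (i mod p) - int (j mod p))^2 + (int (i div p) + 1) + (int (j div p) + 1)"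
  unfolding Bf_vv using assms by (simp add: vv_def power2_eq_square algebra_simps)

lemma Bf_ex:
  "Bf (vv p) (ww p) (p * LL p) (p * LL p) = -2"
  "Bf (vv p) (ww p) (p * LL p + 1) (p * LL p + 1) = 2"
  "Bf (vv p) (ww p) (p * LL p + 2) (p * LL p + 2) = -2"
  "Bf (vv p) (ww p) (p * LL p) (p * LL p + 1) = 0"
  "Bf (vv p) (ww p) (p * LL p) (p * LL p + 2) = 0"
  "Bf (vv p) (ww p) (p * LL p + 1) (p * LL p + 2) = 0"
  unfolding Bf_vv by (simp_all add: vv_def)

lemma simple_Gr: "simple_graph (nV p) (Gr p)"
  unfolding simple_graph_def Gr_def using Bf_sym by metis

lemma LL_lt: "p > 0 \<Longrightarrow> LL p < p" by (simp add: LL_def)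

lemma beta_Gr:
  assumes p: "prime p" "p > 2"
  shows "beta (nV p) (Gr p) = 3"
proof -
  have pi: "prime (int p)" using p by simp
  have p2: "\<not> int p dvd 2" using prime_not_dvd2[of "int p"] p by simp
  have selfB: "\<forall>i<nV p. \<not> int p dvd Bf (vv p) (ww p) i i"
  proof (intro allI impI)
    fix i assume i: "i < nV p"
    show "\<not> int p dvd Bf (vv p) (ww p) i i"
    proof (cases "i < p * LL p")
      case True
      have c: "i div p < LL p" using True by (metis div_less_iff_less_mult mult.commute p(2) gr_zeroI not_less0 bot_nat_0.not_eq_extremum zero_less_iff_neq_zero)
      have e: "Bf (vv p) (ww p) i i = 2 * (int (i div p) + 1)" using Bf_V[OF True True] by simp
      show ?thesis
      proof
        assume "int p dvd Bf (vv p) (ww p) i i"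
        then have "int p dvd int (i div p) + 1" using e dvd_2_times[of "int p"] pi p by simp
        moreover have "int (i div p) + 1 < int p" using c LL_lt[of p] p by simp
        ultimately show False using zdvd_imp_le by fastforce
      qed
    next
      case False
      then have "i = p * LL p \<or> i = p * LL p + 1 \<or> i = p * LL p + 2" using i by (auto simp: nV_def)
      then show ?thesis using Bf_ex p2 by auto
    qed
  qed
  have nonadj: "\<forall>i<nV p. \<forall>j<nV p. i \<noteq> j \<longrightarrow> \<not> Gr p j i \<longrightarrow> int p dvd Bf (vv p) (ww p) i j"
    unfolding Gr_def using Bf_sym by metis
  show ?thesis
  proof (rule beta_eq_3[OF p(1) selfB nonadj simple_Gr, of "p * LL p" "p * LL p + 1" "p * LL p + 2"])
    show "\<not> Gr p (p * LL p) (p * LL p + 1)" "\<not> Gr p (p * LL p) (p * LL p + 2)" "\<not> Gr p (p * LL p + 1) (p * LL p + 2)"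
      unfolding Gr_def using Bf_ex by simp_all
  qed (simp_all add: nV_def)
qed



definition feasw :: "nat \<Rightarrow> (nat \<Rightarrow> nat \<Rightarrow> bool) \<Rightarrow> (nat set \<Rightarrow> real) \<Rightarrow> bool" where
  "feasw n E w \<longleftrightarrow> (\<forall>C\<in>cliques n E. 0 \<le> w C) \<and> (\<forall>v<n. (\<Sum>C\<in>{C\<in>cliques n E. v \<in> C}. w C) \<ge> 1)"

definition FS :: "nat \<Rightarrow> (nat \<Rightarrow> nat \<Rightarrow> bool) \<Rightarrow> real set" where
  "FS n E = {(\<Sum>C\<in>cliques n E. w C) | w. feasw n E w}"

lemma frac_eq: "frac_clique_cover n E = Inf (FS n E)"
  unfolding frac_clique_cover_def FS_def feasw_def ..

lemma finite_cliques: "finite (cliques n E)"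
  by (rule finite_subset[of _ "Pow {0..<n}"]) (auto simp: cliques_def)

lemma FS_bdd: "bdd_below (FS n E)"
proof (rule bdd_belowI[of _ 0])
  fix x assume "x \<in> FS n E"
  then obtain w where xw: "x = (\<Sum>C\<in>cliques n E. w C)" and f: "feasw n E w"
    unfolding FS_def by blast
  have "0 \<le> (\<Sum>C\<in>cliques n E. w C)" by (rule sum_nonneg) (use f in \<open>simp add: feasw_def\<close>)
  then show "0 \<le> x" using xw by simp
qed

lemma frac_upper:
  fixes n :: nat and E and F :: "nat set set"
  assumes F: "finite F" "F \<subseteq> cliques n E" and cov: "\<forall>v<n. \<exists>C\<in>F. v \<in> C"
  shows "frac_clique_cover n E \<le> real (card F)"
proof -
  define w where "w C = (of_bool (C \<in> F) :: real)" for C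
  have feas: "feasw n E w"
    unfolding feasw_def
  proof (intro conjI allI impI ballI)
    fix C show "0 \<le> w C" by (simp add: w_def)
  next
    fix v assume "v < n"
    then obtain C0 where C0: "C0 \<in> F" "v \<in> C0" using cov by blast
    have "C0 \<in> {C\<in>cliques n E. v \<in> C}" using C0 F by auto
    then have "w C0 \<le> (\<Sum>C\<in>{C\<in>cliques n E. v \<in> C}. w C)"
      by (rule member_le_sum) (simp_all add: w_def finite_cliques)
    then show "(\<Sum>C\<in>{C\<in>cliques n E. v \<in> C}. w C) \<ge> 1" using C0 by (simp add: w_def)
  qed
  have val: "(\<Sum>C\<in>cliques n E. w C) = real (card F)"
  proof -
    have "(\<Sum>C\<in>cliques n E. w C) = real (card (cliques n E \<inter> {C. C \<in> F}))"
      unfolding w_def using finite_cliques by simp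
    also have "cliques n E \<inter> {C. C \<in> F} = F" using F by auto
    finally show ?thesis .
  qed
  have "real (card F) \<in> FS n E" unfolding FS_def using feas val[symmetric] by blast
  then show ?thesis unfolding frac_eq by (rule cInf_lower[OF _ FS_bdd])
qed

lemma frac_lower:
  fixes n :: nat and E and V :: "nat set" and \<omega> :: real
  assumes V: "V \<subseteq> {0..<n}" and om: "\<omega> > 0" and cl: "\<forall>C\<in>cliques n E. real (card (C \<inter> V)) \<le> \<omega>"
  shows "frac_clique_cover n E \<ge> real (card V) / \<omega>"
proof -
  have finV: "finite V" using V finite_subset by blast
  have ne: "FS n E \<noteq> {}"
  proof -
    define w where "w C = (of_bool (\<exists>v. C = {v}) :: real)" for C :: "nat set"
    have "feasw n E w" unfolding feasw_def
    proof (intro conjI allI impI ballI)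
      fix C show "0 \<le> w C" by (simp add: w_def)
    next
      fix v assume v: "v < n"
      have "{v} \<in> {C\<in>cliques n E. v \<in> C}" using v by (simp add: cliques_def)
      then have "w {v} \<le> (\<Sum>C\<in>{C\<in>cliques n E. v \<in> C}. w C)"
        by (rule member_le_sum) (simp_all add: w_def finite_cliques)
      then show "1 \<le> (\<Sum>C\<in>{C\<in>cliques n E. v \<in> C}. w C)" by (simp add: w_def)
    qed
    then show ?thesis unfolding FS_def by blast
  qed
  show ?thesis unfolding frac_eq
  proof (rule cInf_greatest[OF ne])
    fix x assume "x \<in> FS n E"
    then obtain w where x: "x = (\<Sum>C\<in>cliques n E. w C)" and f: "feasw n E w"
      unfolding FS_def by blast
    have w0: "\<forall>C\<in>cliques n E. 0 \<le> w C" and w1: "\<forall>v<n. 1 \<le> (\<Sum>C\<in>{C\<in>cliques n E. v \<in> C}. w C)"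
      using f unfolding feasw_def by auto
    have sw: "(\<Sum>C\<in>{C\<in>cliques n E. v \<in> C}. w C) = (\<Sum>C\<in>cliques n E. w C * of_bool (v \<in> C))" for v
    proof -
      have e: "{C\<in>cliques n E. v \<in> C} = cliques n E \<inter> {C. v \<in> C}" by auto
      have "(\<Sum>C\<in>cliques n E. w C * of_bool (v \<in> C)) = (\<Sum>C\<in>cliques n E \<inter> {C. v \<in> C}. w C)"
        by (rule sum_mult_of_bool_eq[OF finite_cliques])
      then show ?thesis using e by simp
    qed
    have "real (card V) = (\<Sum>v\<in>V. 1)" by simp
    also have "\<dots> \<le> (\<Sum>v\<in>V. \<Sum>C\<in>{C\<in>cliques n E. v \<in> C}. w C)"
    proof (rule sum_mono)
      fix v assume "v \<in> V"
      then have "v < n" using V by auto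
      then show "1 \<le> (\<Sum>C\<in>{C\<in>cliques n E. v \<in> C}. w C)" using w1 by blast
    qed
    also have "\<dots> = (\<Sum>v\<in>V. \<Sum>C\<in>cliques n E. w C * of_bool (v \<in> C))"
      by (rule sum.cong[OF refl sw])
    also have "\<dots> = (\<Sum>C\<in>cliques n E. \<Sum>v\<in>V. w C * of_bool (v \<in> C))"
      by (rule sum.swap)
    also have "\<dots> = (\<Sum>C\<in>cliques n E. w C * real (card (C \<inter> V)))"
    proof (intro sum.cong refl)
      fix C
      have "(\<Sum>v\<in>V. w C * of_bool (v \<in> C)) = w C * (\<Sum>v\<in>V. of_bool (v \<in> C))"
        by (simp add: sum_distrib_left)
      also have "(\<Sum>v\<in>V. (of_bool (v \<in> C) :: real)) = real (card (V \<inter> {v. v \<in> C}))"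
        using finV by simp
      also have "V \<inter> {v. v \<in> C} = C \<inter> V" by auto
      finally show "(\<Sum>v\<in>V. w C * of_bool (v \<in> C)) = w C * real (card (C \<inter> V))" .
    qed
    also have "\<dots> \<le> (\<Sum>C\<in>cliques n E. w C * \<omega>)"
    proof (rule sum_mono)
      fix C assume "C \<in> cliques n E"
      then show "w C * real (card (C \<inter> V)) \<le> w C * \<omega>"
        using w0 cl by (simp add: mult_left_mono)
    qed
    also have "\<dots> = x * \<omega>" by (simp add: x sum_distrib_right)
    finally show "real (card V) / \<omega> \<le> x" using om by (simp add: divide_le_eq)
  qed
qed



lemma div_same_close:
  fixes a a' M :: nat
  assumes "M \<ge> 1" "a div M = a' div M"
  shows "(int a - int a')^2 \<le> (int M - 1)^2"
proof -
  define q where "q = a div M"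
  have e1: "int a = int M * int q + int (a mod M)" unfolding q_def
    by (metis div_mult_mod_eq mult.commute of_nat_add of_nat_mult)
  have e2: "int a' = int M * int q + int (a' mod M)" unfolding q_def assms(2)
    by (metis div_mult_mod_eq mult.commute of_nat_add of_nat_mult)
  have r: "a mod M < M" "a' mod M < M" using assms by simp_all
  have "\<bar>int a - int a'\<bar> \<le> int M - 1" using e1 e2 r by linarith
  moreover have "0 \<le> int M - 1" using assms by simp
  ultimately show ?thesis using abs_le_square_iff[of "int a - int a'" "int M - 1"] by simp
qed

lemma frac_Gr_upper:
  assumes p: "prime p" "p > 2" and M: "M \<ge> 1" "(M - 1)^2 + 2 * LL p < p"
  shows "frac_clique_cover (nV p) (Gr p) \<le> real ((p - 1) div M + 4)"
proof -
  define L where "L = LL p"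
  define J where "J = (p - 1) div M + 1"
  define Q where "Q j = {i. i < p * L \<and> (i mod p) div M = j}" for j
  define F where "F = Q ` {0..<J} \<union> {{p*L}, {p*L+1}, {p*L+2}}"
  have finF: "finite F" by (simp add: F_def)
  have cardF: "card F \<le> J + 3"
  proof -
    have "card F \<le> card (Q ` {0..<J}) + card {{p*L}, {p*L+1}, {p*L+2}}"
      unfolding F_def by (rule card_Un_le)
    also have "card (Q ` {0..<J}) \<le> J" using card_image_le[of "{0..<J}" Q] by simp
    also have "card {{p*L}, {p*L+1}, {p*L+2}} \<le> 3" by (rule card_insert_le_m1) (simp_all add: card_insert_le_m1)
    finally show ?thesis by simp
  qed
  have pi: "prime (int p)" using p by simp
  have Qcl: "Q j \<in> cliques (nV p) (Gr p)" for j
    unfolding cliques_def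
  proof (intro CollectI conjI ballI impI)
    show "Q j \<subseteq> {0..<nV p}" by (auto simp: Q_def nV_def L_def)
    fix u v assume u: "u \<in> Q j" and v: "v \<in> Q j" and uv: "u \<noteq> v"
    have uL: "u < p * LL p" and vL: "v < p * LL p" using u v by (auto simp: Q_def L_def)
    have bl: "(u mod p) div M = (v mod p) div M" using u v by (simp add: Q_def)
    have e: "Bf (vv p) (ww p) u v = (int (u mod p) - int (v mod p))^2 + (int (u div p) + 1) + (int (v div p) + 1)"
      by (rule Bf_V[OF uL vL])
    have p0: "p > 0" using p by simp
    have cu: "u div p < LL p" using uL p0 by (simp add: div_less_iff_less_mult mult.commute)
    have cv: "v div p < LL p" using vL p0 by (simp add: div_less_iff_less_mult mult.commute)
    have sq: "(int (u mod p) - int (v mod p))^2 \<le> (int M - 1)^2" by (rule div_same_close[OF M(1) bl])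
    have "(int M - 1)^2 = int ((M - 1)^2)" using M(1) by (simp add: of_nat_diff)
    then have lt: "(int M - 1)^2 + 2 * int (LL p) < int p" using M(2) by linarith
    have pos: "0 < Bf (vv p) (ww p) u v" unfolding e by (smt (verit) zero_le_power2 of_nat_0_le_iff)
    have small: "Bf (vv p) (ww p) u v < int p" unfolding e using sq lt cu cv by linarith
    have "\<not> int p dvd Bf (vv p) (ww p) u v" using pos small zdvd_imp_le by fastforce
    then show "Gr p u v" unfolding Gr_def using uL vL uv by (simp add: nV_def)
  qed
  have Fsub: "F \<subseteq> cliques (nV p) (Gr p)"
  proof
    fix C assume "C \<in> F"
    then consider (a) "C \<in> Q ` {0..<J}" | (b) "C = {p*L} \<or> C = {p*L+1} \<or> C = {p*L+2}" unfolding F_def by blast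
    then show "C \<in> cliques (nV p) (Gr p)"
    proof cases
      case a then show ?thesis using Qcl by blast
    next
      case b then show ?thesis by (auto simp: cliques_def nV_def L_def)
    qed
  qed
  have cov: "\<forall>v<nV p. \<exists>C\<in>F. v \<in> C"
  proof (intro allI impI)
    fix v assume v: "v < nV p"
    show "\<exists>C\<in>F. v \<in> C"
    proof (cases "v < p * L")
      case True
      have "v mod p \<le> p - 1" using p by (simp add: less_Suc_eq_le[symmetric])
      then have "(v mod p) div M \<le> (p - 1) div M" by (rule div_le_mono)
      then have "(v mod p) div M \<in> {0..<J}" by (simp add: J_def)
      moreover have "v \<in> Q ((v mod p) div M)" using True by (simp add: Q_def)
      ultimately show ?thesis unfolding F_def by blast
    next
      case False
      then have "v = p*L \<or> v = p*L+1 \<or> v = p*L+2" using v by (auto simp: nV_def L_def)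
      then show ?thesis unfolding F_def by auto
    qed
  qed
  have "frac_clique_cover (nV p) (Gr p) \<le> real (card F)" by (rule frac_upper[OF finF Fsub cov])
  also have "\<dots> \<le> real ((p - 1) div M + 4)" using cardF by (simp add: J_def)
  finally show ?thesis .
qed

lemma frac_Gr_lower:
  assumes p: "prime p" "p > 2"
  shows "frac_clique_cover (nV p) (Gr p) \<ge> real (p * LL p) / sqrt (real p ^ 2 * (real p + 1))"
proof -
  define V where "V = {0..<p * LL p}"
  define \<omega> where "\<omega> = sqrt (real p ^ 2 * (real p + 1))"
  have p0: "p > 0" using p by simp
  have om: "\<omega> > 0" unfolding \<omega>_def using p0 by simp
  have Vsub: "V \<subseteq> {0..<nV p}" by (auto simp: V_def nV_def)
  define f where "f i = (int (i mod p), int (i div p) + 1)" for i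
  have injf: "inj_on f V"
  proof (rule inj_onI)
    fix i j assume "f i = f j"
    then have "i mod p = j mod p" "i div p = j div p" by (auto simp: f_def)
    then show "i = j" by (metis div_mult_mod_eq)
  qed
  have cl: "\<forall>C\<in>cliques (nV p) (Gr p). real (card (C \<inter> V)) \<le> \<omega>"
  proof
    fix C assume C: "C \<in> cliques (nV p) (Gr p)"
    define S where "S = f ` (C \<inter> V)"
    have cS: "card S = card (C \<inter> V)" unfolding S_def
      by (rule card_image) (rule inj_on_subset[OF injf], auto)
    have pi: "prime (int p)" "int p > 2" using p by simp_all
    have box: "\<forall>x\<in>S. 0 \<le> fst x \<and> fst x < int p \<and> 1 \<le> snd x \<and> snd x < int p"
    proof
      fix x assume "x \<in> S"
      then obtain i where i: "i \<in> V" "x = f i" unfolding S_def by auto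
      have "i div p < LL p" using i(1) p0 by (simp add: V_def div_less_iff_less_mult mult.commute)
      moreover have "LL p < p" using LL_lt p0 by simp
      ultimately show "0 \<le> fst x \<and> fst x < int p \<and> 1 \<le> snd x \<and> snd x < int p"
        using i p0 by (simp add: f_def)
    qed
    have clS: "\<forall>x\<in>S. \<forall>y\<in>S. x \<noteq> y \<longrightarrow> \<not> int p dvd ((fst x - fst y)^2 + snd x + snd y)"
    proof (intro ballI impI)
      fix x y assume x: "x \<in> S" and y: "y \<in> S" and ne: "x \<noteq> y"
      obtain i where i: "i \<in> C" "i \<in> V" "x = f i" using x unfolding S_def by auto
      obtain j where j: "j \<in> C" "j \<in> V" "y = f j" using y unfolding S_def by auto
      have "i \<noteq> j" using ne i j by auto
      then have "Gr p i j" using C i j unfolding cliques_def by blast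
      then have "\<not> int p dvd Bf (vv p) (ww p) i j" by (simp add: Gr_def)
      moreover have "Bf (vv p) (ww p) i j = (fst x - fst y)^2 + snd x + snd y"
        using Bf_V[of i p j] i j by (simp add: V_def f_def)
      ultimately show "\<not> int p dvd ((fst x - fst y)^2 + snd x + snd y)" by simp
    qed
    have "real (card S)^2 \<le> (real_of_int (int p))^2 * (real_of_int (int p) + 1)"
      by (rule clique_bound[OF pi box clS])
    then have "real (card S)^2 \<le> real p ^ 2 * (real p + 1)" by simp
    then have "real (card S) \<le> \<omega>" unfolding \<omega>_def by (rule real_le_rsqrt)
    then show "real (card (C \<inter> V)) \<le> \<omega>" using cS by simp
  qed
  have "frac_clique_cover (nV p) (Gr p) \<ge> real (card V) / \<omega>"
    by (rule frac_lower[OF Vsub om cl])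
  then show ?thesis by (simp add: V_def \<omega>_def)
qed



lemma quarter_lower:
  fixes a x :: real assumes "0 \<le> a" "a^4 \<le> x"
  shows "a \<le> x powr (1/4)"
proof (cases "a = 0")
  case True then show ?thesis by simp
next
  case False
  then have a0: "a > 0" using assms by simp
  have "(a^4) powr (1/4) = (a powr 4) powr (1/4)" using a0 by (simp only: powr_numeral)
  also have "\<dots> = a powr (4 * (1/4))" by (rule powr_powr)
  also have "\<dots> = a" using a0 by simp
  finally have "a = (a^4) powr (1/4)" by simp
  also have "\<dots> \<le> x powr (1/4)" by (rule powr_mono2) (use assms a0 in auto)
  finally show ?thesis .
qed

lemma quarter_upper:
  fixes b x :: real assumes "0 \<le> x" "0 \<le> b" "x \<le> b^4"
  shows "x powr (1/4) \<le> b"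
proof (cases "b = 0")
  case True then show ?thesis using assms by simp
next
  case False
  then have b0: "b > 0" using assms by simp
  have "x powr (1/4) \<le> (b^4) powr (1/4)" by (rule powr_mono2) (use assms in auto)
  also have "(b^4) powr (1/4) = (b powr 4) powr (1/4)" using b0 by (simp only: powr_numeral)
  also have "\<dots> = b powr (4 * (1/4))" by (rule powr_powr)
  also have "\<dots> = b" using b0 by simp
  finally show ?thesis .
qed

lemma main_bounds:
  assumes p: "prime p" "p \<ge> 64"
  shows "(1/16) * real (nV p) powr (1/4) \<le> frac_clique_cover (nV p) (Gr p)
       \<and> frac_clique_cover (nV p) (Gr p) \<le> 10 * real (nV p) powr (1/4)"
proof -
  define s where "s = sqrt (real p)"
  have p2: "p > 2" using p by simp
  have sp: "s * s = real p" unfolding s_def by simp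
  have s8: "s \<ge> 8"
  proof -
    have "(8::real)^2 \<le> real p" using p by simp
    then show ?thesis unfolding s_def by (rule real_le_rsqrt)
  qed
  define M where "M = nat \<lfloor>s / 2\<rfloor>"
  have M1: "real M \<le> s / 2" "real M > s / 2 - 1" unfolding M_def using s8 by linarith+
  have Mge: "M \<ge> 1" using M1 s8 by linarith
  define L where "L = LL p"
  have L1: "real L \<le> real p / 4" "real L \<ge> real p / 4 - 1" unfolding L_def LL_def by linarith+
  have cond: "(M - 1)^2 + 2 * LL p < p"
  proof -
    have "real ((M - 1)^2) \<le> real M ^ 2" using Mge by (simp add: of_nat_diff power_mono)
    also have "\<dots> \<le> (s/2)^2" using M1 by (simp add: power_mono)
    also have "\<dots> = real p / 4" using sp by (simp add: power2_eq_square field_simps)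
    finally have "real ((M - 1)^2 + 2 * LL p) \<le> real p / 4 + 2 * (real p / 4)" using L1 by (simp add: L_def)
    also have "\<dots> < real p" using p by simp
    finally show ?thesis by linarith
  qed
  have up: "frac_clique_cover (nV p) (Gr p) \<le> 5 * s"
  proof -
    have "frac_clique_cover (nV p) (Gr p) \<le> real ((p - 1) div M + 4)" by (rule frac_Gr_upper[OF p(1) p2 Mge cond])
    also have "real ((p - 1) div M) \<le> real p / real M"
    proof -
      have "((p - 1) div M) * M \<le> p - 1" by (rule div_times_less_eq_dividend)
      then have "real ((p - 1) div M) * real M \<le> real (p - 1)" by (metis of_nat_le_iff of_nat_mult)
      then have "real ((p - 1) div M) \<le> real (p - 1) / real M" using Mge by (simp add: le_divide_eq)
      also have "\<dots> \<le> real p / real M" using Mge by (simp add: divide_right_mono)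
      finally show ?thesis .
    qed
    then have "real ((p - 1) div M + 4) \<le> real p / real M + 4" by simp
    also have "real p / real M \<le> real p / (s / 4)"
      using M1 s8 by (intro divide_left_mono) auto
    also have "real p / (s / 4) = 4 * s" using sp s8 by (simp add: field_simps)
    finally show ?thesis using s8 by linarith
  qed
  have lo: "s / 16 \<le> frac_clique_cover (nV p) (Gr p)"
  proof -
    have "sqrt (real p ^ 2 * (real p + 1)) = real p * sqrt (real p + 1)"
      by (simp add: real_sqrt_mult)
    moreover have "sqrt (real p + 1) \<le> 2 * s"
    proof -
      have "sqrt (real p + 1) \<le> sqrt (4 * real p)" using p by simp
      also have "\<dots> = 2 * s" unfolding s_def by (simp add: real_sqrt_mult)
      finally show ?thesis .
    qed
    moreover have "real L \<ge> real p / 8" using L1 p by simp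
    ultimately have "s / 16 \<le> real (p * LL p) / sqrt (real p ^ 2 * (real p + 1))"
    proof -
      assume e: "sqrt (real p ^ 2 * (real p + 1)) = real p * sqrt (real p + 1)"
        and b: "sqrt (real p + 1) \<le> 2 * s" and l: "real L \<ge> real p / 8"
      have pos: "sqrt (real p + 1) > 0" by simp
      have "real (p * LL p) / sqrt (real p ^ 2 * (real p + 1)) = real L / sqrt (real p + 1)"
        using e p by (simp add: L_def)
      also have "real L / sqrt (real p + 1) \<ge> (real p / 8) / (2 * s)"
        using l b pos s8 by (intro frac_le) auto
      also have "(real p / 8) / (2 * s) = s / 16" using sp s8 by (simp add: field_simps)
      finally show ?thesis by simp
    qed
    also have "\<dots> \<le> frac_clique_cover (nV p) (Gr p)" by (rule frac_Gr_lower[OF p(1) p2])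
    finally show ?thesis .
  qed
  have N: "real (nV p) = real p * real L + 3" by (simp add: nV_def L_def)
  have Nup: "real (nV p) powr (1/4) \<le> s"
  proof (rule quarter_upper)
    have "real p * real L \<le> real p * (real p / 4)" using L1(1) by (intro mult_left_mono) auto
    moreover have "s^4 = real p * real p" using sp by (simp add: power4_eq_xxxx)
    moreover have "real p * real p \<ge> 64 * 64" using p by (intro mult_mono) auto
    ultimately show "real (nV p) \<le> s^4" using N by linarith
  qed (use s8 in auto)
  have Nlo: "s / 2 \<le> real (nV p) powr (1/4)"
  proof (rule quarter_lower)
    have "(s/2)^4 = real p * real p / 16" using sp by (simp add: power4_eq_xxxx field_simps)
    moreover have "real p * real L \<ge> real p * (real p / 8)" using L1 p by (intro mult_left_mono) auto
    moreover have "real p * (real p / 8) = real p * real p / 8" by simp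
    moreover have "real p * real p \<ge> 0" by simp
    ultimately show "(s/2)^4 \<le> real (nV p)" using N by linarith
  qed (use s8 in auto)
  show ?thesis using up lo Nup Nlo by simp
qed

definition pk :: "nat \<Rightarrow> nat" where "pk k = (SOME p. prime p \<and> k + 64 < p)"

lemma pk: "prime (pk k) \<and> k + 64 < pk k"
  unfolding pk_def by (rule someI_ex) (use bigger_prime in blast)

theorem theorem3:
  shows "\<exists>(N :: nat \<Rightarrow> nat) (G :: nat \<Rightarrow> nat \<Rightarrow> nat \<Rightarrow> bool).
     filterlim N at_top sequentially \<and>
     (\<forall>k. simple_graph (N k) (G k) \<and> beta (N k) (G k) = 3) \<and>
     (\<lambda>k. frac_clique_cover (N k) (G k)) \<in> \<Theta>(\<lambda>k. real (N k) powr (1/4))"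
proof (intro exI conjI allI)
  let ?N = "\<lambda>k. nV (pk k)" and ?G = "\<lambda>k. Gr (pk k)"
  have Nk: "k \<le> ?N k" for k
  proof -
    have p: "k + 64 < pk k" using pk by blast
    have "LL (pk k) \<ge> 1" using p by (simp add: LL_def)
    then have q: "pk k \<le> pk k * LL (pk k)" by simp
    show ?thesis unfolding nV_def using p q by linarith
  qed
  show "filterlim ?N at_top sequentially"
    by (rule filterlim_at_top_mono[OF filterlim_ident]) (use Nk in auto)
  fix k
  show "simple_graph (?N k) (?G k)" by (rule simple_Gr)
  show "beta (?N k) (?G k) = 3" using pk[of k] by (intro beta_Gr) auto
next
  show "(\<lambda>k. frac_clique_cover (nV (pk k)) (Gr (pk k))) \<in> \<Theta>(\<lambda>k. real (nV (pk k)) powr (1/4))"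
  proof (rule bigthetaI'[of "1/16" 10])
    show "eventually (\<lambda>k. 1/16 * norm (real (nV (pk k)) powr (1/4)) \<le> norm (frac_clique_cover (nV (pk k)) (Gr (pk k)))
        \<and> norm (frac_clique_cover (nV (pk k)) (Gr (pk k))) \<le> 10 * norm (real (nV (pk k)) powr (1/4))) sequentially"
    proof (rule always_eventually, rule allI)
      fix k
      have p: "prime (pk k)" "pk k \<ge> 64" using pk[of k] by auto
      have b: "(1/16) * real (nV (pk k)) powr (1/4) \<le> frac_clique_cover (nV (pk k)) (Gr (pk k))"
        "frac_clique_cover (nV (pk k)) (Gr (pk k)) \<le> 10 * real (nV (pk k)) powr (1/4)"
        using main_bounds[OF p] by auto
      have g0: "0 \<le> real (nV (pk k)) powr (1/4)" by simp
      then have "0 \<le> frac_clique_cover (nV (pk k)) (Gr (pk k))" using b(1) by linarith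
      then show "1/16 * norm (real (nV (pk k)) powr (1/4)) \<le> norm (frac_clique_cover (nV (pk k)) (Gr (pk k)))
        \<and> norm (frac_clique_cover (nV (pk k)) (Gr (pk k))) \<le> 10 * norm (real (nV (pk k)) powr (1/4))"
        using b g0 by simp
    qed
  qed simp_all
qed


end
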